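(* If $R$ is a prime right almost perfect ring, then $R$ is $h$-local.
   Context: Rings are associative with identity $1\neq 0$. A ring $R$ is called right almost perfect if $R/I$ is a right perfect ring for every two-sided ideal $I$ of $R$ with $I\neq 0$ and $I\neq R$. A ring is semilocal if $R/J(R)$ is semisimple artinian, where $J(R)$ is the Jacobson radical. A (prime) ring $R$ is called $h$-local if: (1) for every non-zero proper two-sided ideal $I$ of $R$, the factor ring $R/I$ is semilocal; and (2) every non-zero prime two-sided ideal of $R$ is contained in only one maximal two-sided ideal of $R$. *)

theory Defs
  imports "HOL-Algebra.QuotRing"
begin

(* Noncommutative rings via the HOL-Algebra locale ring; "ideal" = two-sided ideal. *)

definition right_ideal :: "'a set \<Rightarrow> ('a, 'b) ring_scheme \<Rightarrow> bool" where
  "right_ideal I R \<longleftrightarrow> additive_subgroup I R \<and>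
     (\<forall>a\<in>I. \<forall>x\<in>carrier R. a \<otimes>\<^bsub>R\<^esub> x \<in> I)"

definition maximal_right_ideal :: "'a set \<Rightarrow> ('a, 'b) ring_scheme \<Rightarrow> bool" where
  "maximal_right_ideal M R \<longleftrightarrow> right_ideal M R \<and> M \<noteq> carrier R \<and>
     (\<forall>I. right_ideal I R \<and> M \<subseteq> I \<longrightarrow> I = M \<or> I = carrier R)"

definition jacobson :: "('a, 'b) ring_scheme \<Rightarrow> 'a set" where
  "jacobson R = carrier R \<inter> \<Inter> {M. maximal_right_ideal M R}"

definition right_artinian :: "('a, 'b) ring_scheme \<Rightarrow> bool" where
  "right_artinian R \<longleftrightarrow> (\<forall>f :: nat \<Rightarrow> 'a set.
     (\<forall>n. right_ideal (f n) R) \<and> (\<forall>n. f (Suc n) \<subseteq> f n) \<longrightarrow>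
     (\<exists>n. \<forall>m\<ge>n. f m = f n))"

definition semisimple_artinian :: "('a, 'b) ring_scheme \<Rightarrow> bool" where
  "semisimple_artinian R \<longleftrightarrow> right_artinian R \<and> jacobson R = {\<zero>\<^bsub>R\<^esub>}"

definition semilocal :: "('a, 'b) ring_scheme \<Rightarrow> bool" where
  "semilocal R \<longleftrightarrow> semisimple_artinian (R Quot (jacobson R))"

(* product a_n ... a_1 of a sequence (a_1, a_2, ...) given as a : nat \<Rightarrow> 'a, indices from 1 *)
fun rprod :: "('a, 'b) ring_scheme \<Rightarrow> (nat \<Rightarrow> 'a) \<Rightarrow> nat \<Rightarrow> 'a" where
  "rprod R a 0 = \<one>\<^bsub>R\<^esub>"
| "rprod R a (Suc n) = a (Suc n) \<otimes>\<^bsub>R\<^esub> rprod R a n"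

(* T-nilpotence in the sense needed for right perfect rings:
   for every sequence a_1, a_2, ... in I, a_n ... a_2 a_1 = 0 for some n *)
definition T_nilpotent_for_right_modules :: "'a set \<Rightarrow> ('a, 'b) ring_scheme \<Rightarrow> bool" where
  "T_nilpotent_for_right_modules I R \<longleftrightarrow>
     (\<forall>a. (\<forall>n\<ge>1. a n \<in> I) \<longrightarrow> (\<exists>n\<ge>1. rprod R a n = \<zero>\<^bsub>R\<^esub>))"

(* Bass: R is right perfect iff R/J(R) is semisimple artinian and J(R) is T-nilpotent
   in the above sense (equivalently MJ \<noteq> M for every nonzero right module M) *)
definition right_perfect :: "('a, 'b) ring_scheme \<Rightarrow> bool" where
  "right_perfect R \<longleftrightarrow> semilocal R \<and> T_nilpotent_for_right_modules (jacobson R) R"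

definition right_almost_perfect :: "('a, 'b) ring_scheme \<Rightarrow> bool" where
  "right_almost_perfect R \<longleftrightarrow>
     (\<forall>I. ideal I R \<and> I \<noteq> {\<zero>\<^bsub>R\<^esub>} \<and> I \<noteq> carrier R \<longrightarrow> right_perfect (R Quot I))"

definition prime_ideal :: "'a set \<Rightarrow> ('a, 'b) ring_scheme \<Rightarrow> bool" where
  "prime_ideal P R \<longleftrightarrow> ideal P R \<and> P \<noteq> carrier R \<and>
     (\<forall>A B. ideal A R \<and> ideal B R \<and> (\<forall>a\<in>A. \<forall>b\<in>B. a \<otimes>\<^bsub>R\<^esub> b \<in> P)
        \<longrightarrow> A \<subseteq> P \<or> B \<subseteq> P)"

definition prime_ring :: "('a, 'b) ring_scheme \<Rightarrow> bool" where
  "prime_ring R \<longleftrightarrow> prime_ideal {\<zero>\<^bsub>R\<^esub>} R"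

definition maximal_two_sided_ideal :: "'a set \<Rightarrow> ('a, 'b) ring_scheme \<Rightarrow> bool" where
  "maximal_two_sided_ideal M R \<longleftrightarrow> ideal M R \<and> M \<noteq> carrier R \<and>
     (\<forall>I. ideal I R \<and> M \<subseteq> I \<longrightarrow> I = M \<or> I = carrier R)"

definition h_local :: "('a, 'b) ring_scheme \<Rightarrow> bool" where
  "h_local R \<longleftrightarrow>
     (\<forall>I. ideal I R \<and> I \<noteq> {\<zero>\<^bsub>R\<^esub>} \<and> I \<noteq> carrier R \<longrightarrow> semilocal (R Quot I)) \<and>
     (\<forall>P. prime_ideal P R \<and> P \<noteq> {\<zero>\<^bsub>R\<^esub>} \<longrightarrow>
        (\<exists>!M. maximal_two_sided_ideal M R \<and> P \<subseteq> M))"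

end

theory Submission imports Defs begin

lemma (in ring) add_subgroupI':
  assumes "I \<subseteq> carrier R" "\<zero> \<in> I"
    "\<And>a b. a \<in> I \<Longrightarrow> b \<in> I \<Longrightarrow> a \<oplus> b \<in> I"
    "\<And>a. a \<in> I \<Longrightarrow> \<ominus> a \<in> I"
  shows "subgroup I (add_monoid R)"
  using assms by (auto intro!: add.subgroupI simp: a_inv_def[symmetric])

lemma (in ring) right_idealI:
  assumes "I \<subseteq> carrier R" "\<zero> \<in> I"
    "\<And>a b. a \<in> I \<Longrightarrow> b \<in> I \<Longrightarrow> a \<oplus> b \<in> I"
    "\<And>a. a \<in> I \<Longrightarrow> \<ominus> a \<in> I"
    "\<And>a x. a \<in> I \<Longrightarrow> x \<in> carrier R \<Longrightarrow> a \<otimes> x \<in> I"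
  shows "right_ideal I R"
  unfolding right_ideal_def additive_subgroup_def
  using assms by (auto intro!: add.subgroupI simp: a_inv_def[symmetric])

lemma (in ring) right_idealD:
  assumes "right_ideal I R"
  shows "I \<subseteq> carrier R" "\<zero> \<in> I"
    "\<And>a b. a \<in> I \<Longrightarrow> b \<in> I \<Longrightarrow> a \<oplus> b \<in> I"
    "\<And>a. a \<in> I \<Longrightarrow> \<ominus> a \<in> I"
    "\<And>a x. a \<in> I \<Longrightarrow> x \<in> carrier R \<Longrightarrow> a \<otimes> x \<in> I"
  using assms unfolding right_ideal_def
  by (auto dest: additive_subgroup.a_subset intro: additive_subgroup.a_subset additive_subgroup.zero_closed
     additive_subgroup.a_closed additive_subgroup.a_inv_closed)

lemma (in ring) ideal_right: "ideal I R \<Longrightarrow> right_ideal I R"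
  unfolding right_ideal_def by (auto intro: ideal.axioms(1) ideal.I_r_closed)

lemma (in ring) lann_ideal:
  assumes "K \<subseteq> carrier R" "\<And>k s. k \<in> K \<Longrightarrow> s \<in> carrier R \<Longrightarrow> s \<otimes> k \<in> K"
  shows "ideal {x\<in>carrier R. \<forall>k\<in>K. x \<otimes> k = \<zero>} R"
proof (rule idealI)
  show "ring R" by (rule ring_axioms)
  show "subgroup {x\<in>carrier R. \<forall>k\<in>K. x \<otimes> k = \<zero>} (add_monoid R)"
    by (rule add_subgroupI') (use assms(1) in \<open>auto simp: l_distr l_minus subset_iff\<close>)
next
  fix a x assume a: "a \<in> {x\<in>carrier R. \<forall>k\<in>K. x \<otimes> k = \<zero>}" and x: "x \<in> carrier R"
  show "x \<otimes> a \<in> {x\<in>carrier R. \<forall>k\<in>K. x \<otimes> k = \<zero>}"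
    using a x assms(1) by (auto simp: m_assoc subset_iff)
  show "a \<otimes> x \<in> {x\<in>carrier R. \<forall>k\<in>K. x \<otimes> k = \<zero>}"
    using a x assms by (auto simp: m_assoc subset_iff)
qed

lemma (in ring) rann_ideal:
  assumes "L \<subseteq> carrier R" "\<And>l s. l \<in> L \<Longrightarrow> s \<in> carrier R \<Longrightarrow> l \<otimes> s \<in> L"
  shows "ideal {x\<in>carrier R. \<forall>l\<in>L. l \<otimes> x = \<zero>} R"
proof (rule idealI)
  show "ring R" by (rule ring_axioms)
  show "subgroup {x\<in>carrier R. \<forall>k\<in>L. k \<otimes> x = \<zero>} (add_monoid R)"
    by (rule add_subgroupI') (use assms(1) in \<open>auto simp: r_distr r_minus subset_iff\<close>)
next
  fix a x assume a: "a \<in> {x\<in>carrier R. \<forall>k\<in>L. k \<otimes> x = \<zero>}" and x: "x \<in> carrier R"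
  show "a \<otimes> x \<in> {x\<in>carrier R. \<forall>k\<in>L. k \<otimes> x = \<zero>}"
    using a x assms(1) by (auto simp: m_assoc[symmetric] subset_iff)
  show "x \<otimes> a \<in> {x\<in>carrier R. \<forall>k\<in>L. k \<otimes> x = \<zero>}"
    using a x assms by (auto simp: m_assoc[symmetric] subset_iff)
qed

lemma (in ring) prime_ringD:
  assumes "prime_ring R" "ideal A R" "ideal B R" "\<And>a b. a \<in> A \<Longrightarrow> b \<in> B \<Longrightarrow> a \<otimes> b = \<zero>"
  shows "A \<subseteq> {\<zero>} \<or> B \<subseteq> {\<zero>}"
  using assms unfolding prime_ring_def prime_ideal_def by blast

lemma (in ring) artinian_min:
  assumes "right_artinian R" "F \<noteq> {}" "\<And>K. K \<in> F \<Longrightarrow> right_ideal K R"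
  shows "\<exists>K\<in>F. \<forall>K'\<in>F. K' \<subseteq> K \<longrightarrow> K' = K"
proof -
  define r where "r = {(A,B). A \<in> F \<and> B \<in> F \<and> A \<subset> B}"
  have "wf r"
  proof (rule ccontr)
    assume "\<not> wf r"
    then obtain f where f: "\<forall>i. (f (Suc i), f i) \<in> r"
      unfolding wf_iff_no_infinite_down_chain by auto
    have f1: "f (Suc i) \<in> F \<and> f i \<in> F \<and> f (Suc i) \<subset> f i" for i
      using f unfolding r_def by auto
    have "(\<forall>n. right_ideal (f n) R) \<and> (\<forall>n. f (Suc n) \<subseteq> f n)"
      using f1 assms(3) by auto
    then obtain n where "\<forall>m\<ge>n. f m = f n"
      using assms(1) unfolding right_artinian_def by (elim allE impE) auto
    hence "f (Suc n) = f n" by (drule_tac x="Suc n" in spec) simp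
    with f1[of n] show False by simp
  qed
  obtain K where K: "K \<in> F" using assms(2) by blast
  obtain z where z: "z \<in> F" "\<And>y. (y, z) \<in> r \<Longrightarrow> y \<notin> F"
    using wfE_min[OF \<open>wf r\<close> K] by metis
  have "\<forall>K'\<in>F. K' \<subseteq> z \<longrightarrow> K' = z"
  proof (intro ballI impI)
    fix K' assume "K' \<in> F" "K' \<subseteq> z"
    show "K' = z"
    proof (rule ccontr)
      assume "K' \<noteq> z"
      hence "(K', z) \<in> r" unfolding r_def using \<open>K' \<in> F\<close> \<open>K' \<subseteq> z\<close> z(1) by auto
      thus False using z(2) \<open>K' \<in> F\<close> by blast
    qed
  qed
  thus ?thesis using z(1) by blast
qed

lemma (in ring) minimal_nonzero:
  assumes "right_artinian R" "right_ideal N R" "\<exists>x\<in>N. x \<noteq> \<zero>"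
  shows "\<exists>L. right_ideal L R \<and> L \<subseteq> N \<and> (\<exists>x\<in>L. x \<noteq> \<zero>) \<and>
     (\<forall>K. right_ideal K R \<and> K \<subseteq> L \<and> (\<exists>x\<in>K. x \<noteq> \<zero>) \<longrightarrow> K = L)"
proof -
  let ?F = "{K. right_ideal K R \<and> K \<subseteq> N \<and> (\<exists>x\<in>K. x \<noteq> \<zero>)}"
  have "N \<in> ?F" using assms by blast
  hence "?F \<noteq> {}" by blast
  moreover have "\<And>K. K \<in> ?F \<Longrightarrow> right_ideal K R" by blast
  ultimately obtain L where L: "L \<in> ?F" and Lm: "\<forall>K'\<in>?F. K' \<subseteq> L \<longrightarrow> K' = L"
    using artinian_min[OF assms(1)] by meson
  have "\<forall>K. right_ideal K R \<and> K \<subseteq> L \<and> (\<exists>x\<in>K. x \<noteq> \<zero>) \<longrightarrow> K = L"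
  proof (intro allI impI)
    fix K assume K: "right_ideal K R \<and> K \<subseteq> L \<and> (\<exists>x\<in>K. x \<noteq> \<zero>)"
    have "L \<subseteq> N" using L by simp
    hence "K \<in> ?F" using K by auto
    thus "K = L" using Lm K by simp
  qed
  thus ?thesis using L by auto
qed

lemma (in ring) min_in_ideal:
  assumes pr: "prime_ring R" and I: "ideal I R" "\<exists>k\<in>I. k \<noteq> \<zero>"
    and L: "right_ideal L R" "\<exists>x\<in>L. x \<noteq> \<zero>"
    "\<And>K. right_ideal K R \<Longrightarrow> K \<subseteq> L \<Longrightarrow> \<exists>x\<in>K. x \<noteq> \<zero> \<Longrightarrow> K = L"
  shows "L \<subseteq> I"
proof -
  have Ic: "I \<subseteq> carrier R" by (rule subsetI, rule ideal.Icarr[OF I(1)])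
  let ?A = "{x\<in>carrier R. \<forall>k\<in>I. x \<otimes> k = \<zero>}"
  have A: "ideal ?A R" by (rule lann_ideal[OF Ic]) (simp add: I(1) ideal.I_l_closed)
  have "?A \<subseteq> {\<zero>} \<or> I \<subseteq> {\<zero>}" by (rule prime_ringD[OF pr A I(1)]) auto
  hence A0: "?A \<subseteq> {\<zero>}" using I(2) by blast
  obtain l where l: "l \<in> L" "l \<noteq> \<zero>" using L(2) by blast
  have lc: "l \<in> carrier R" using l right_idealD(1)[OF L(1)] by blast
  have "l \<notin> ?A" using A0 l by blast
  then obtain i where i: "i \<in> I" "l \<otimes> i \<noteq> \<zero>" using lc by blast
  have ic: "i \<in> carrier R" using i Ic by blast
  have K: "right_ideal (L \<inter> I) R"
    using right_idealD[OF L(1)] right_idealD[OF ideal_right[OF I(1)]]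
    by (intro right_idealI) auto
  have "l \<otimes> i \<in> L \<inter> I"
    using right_idealD(5)[OF L(1) l(1) ic] ideal.I_l_closed[OF I(1) i(1) lc] by blast
  hence "L \<inter> I = L" using L(3)[OF K] i(2) by blast
  thus ?thesis by blast
qed

lemma (in ring) brauer:
  assumes pr: "prime_ring R"
    and L: "right_ideal L R" "\<exists>x\<in>L. x \<noteq> \<zero>"
    "\<And>K. right_ideal K R \<Longrightarrow> K \<subseteq> L \<Longrightarrow> \<exists>x\<in>K. x \<noteq> \<zero> \<Longrightarrow> K = L"
  shows "\<exists>e\<in>L. e \<noteq> \<zero> \<and> e \<otimes> e = e"
proof -
  note Ld = right_idealD[OF L(1)]
  have "\<exists>x\<in>L. \<exists>y\<in>L. x \<otimes> y \<noteq> \<zero>"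
  proof (rule ccontr)
    assume "\<not> ?thesis"
    hence LL: "\<And>x y. x \<in> L \<Longrightarrow> y \<in> L \<Longrightarrow> x \<otimes> y = \<zero>" by blast
    let ?Ar = "{x\<in>carrier R. \<forall>l\<in>L. l \<otimes> x = \<zero>}"
    have Ar: "ideal ?Ar R" by (rule rann_ideal) (use Ld in auto)
    have Arc: "?Ar \<subseteq> carrier R" by blast
    let ?A2 = "{x\<in>carrier R. \<forall>k\<in>?Ar. x \<otimes> k = \<zero>}"
    have "\<And>k s. k \<in> ?Ar \<Longrightarrow> s \<in> carrier R \<Longrightarrow> s \<otimes> k \<in> ?Ar"
      using ideal.I_l_closed[OF Ar] by blast
    hence A2: "ideal ?A2 R" by (rule lann_ideal[OF Arc])
    have "?A2 \<subseteq> {\<zero>} \<or> ?Ar \<subseteq> {\<zero>}" by (rule prime_ringD[OF pr A2 Ar]) auto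
    moreover have "L \<subseteq> ?Ar" using LL Ld(1) by blast
    moreover have "L \<subseteq> ?A2" using Ld(1) by blast
    ultimately show False using L(2) by blast
  qed
  then obtain x y where xy: "x \<in> L" "y \<in> L" "x \<otimes> y \<noteq> \<zero>" by blast
  have xc: "x \<in> carrier R" and yc: "y \<in> carrier R" using xy Ld(1) by auto
  have xL: "right_ideal ((\<lambda>l. x \<otimes> l) ` L) R"
  proof (rule right_idealI)
    show "(\<otimes>) x ` L \<subseteq> carrier R" using xc Ld(1) by auto
    show "\<zero> \<in> (\<otimes>) x ` L" using xc Ld(2) by (auto intro!: image_eqI[of _ _ \<zero>])
    fix a b assume "a \<in> (\<otimes>) x ` L" "b \<in> (\<otimes>) x ` L"
    then obtain la lb where "la \<in> L" "lb \<in> L" "a = x \<otimes> la" "b = x \<otimes> lb" by blast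
    thus "a \<oplus> b \<in> (\<otimes>) x ` L" using xc Ld
      by (auto intro!: image_eqI[of _ _ "la \<oplus> lb"] simp: r_distr subset_iff)
  next
    fix a assume "a \<in> (\<otimes>) x ` L"
    then obtain la where "la \<in> L" "a = x \<otimes> la" by blast
    thus "\<ominus> a \<in> (\<otimes>) x ` L" using xc Ld
      by (auto intro!: image_eqI[of _ _ "\<ominus> la"] simp: r_minus subset_iff)
  next
    fix a s assume "a \<in> (\<otimes>) x ` L" "s \<in> carrier R"
    then obtain la where "la \<in> L" "a = x \<otimes> la" by blast
    thus "a \<otimes> s \<in> (\<otimes>) x ` L" using xc Ld \<open>s \<in> carrier R\<close>
      by (auto intro!: image_eqI[of _ _ "la \<otimes> s"] simp: m_assoc subset_iff)
  qed
  have "(\<lambda>l. x \<otimes> l) ` L \<subseteq> L" using Ld(5) xy(1) xc Ld(1) by auto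
  moreover have "\<exists>z\<in>(\<lambda>l. x \<otimes> l) ` L. z \<noteq> \<zero>" using xy by blast
  ultimately have "(\<lambda>l. x \<otimes> l) ` L = L" using L(3)[OF xL] by blast
  then obtain e where e: "e \<in> L" "x = x \<otimes> e" using xy(1) by (metis imageE)
  have ec: "e \<in> carrier R" using e Ld(1) by auto
  let ?r = "{z\<in>L. x \<otimes> z = \<zero>}"
  have r: "right_ideal ?r R"
  proof (rule right_idealI)
    show "?r \<subseteq> carrier R" using Ld(1) by auto
    show "\<zero> \<in> ?r" using Ld(2) xc by auto
    fix a b assume "a \<in> ?r" "b \<in> ?r"
    thus "a \<oplus> b \<in> ?r" using Ld xc by (auto simp: r_distr subset_iff)
  next
    fix a assume "a \<in> ?r"
    thus "\<ominus> a \<in> ?r" using Ld xc by (auto simp: r_minus subset_iff)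
  next
    fix a s assume "a \<in> ?r" "s \<in> carrier R"
    thus "a \<otimes> s \<in> ?r" using Ld xc by (auto simp: m_assoc[symmetric] subset_iff)
  qed
  have r0: "\<And>z. z \<in> ?r \<Longrightarrow> z = \<zero>"
  proof (rule ccontr)
    fix z assume "z \<in> ?r" "z \<noteq> \<zero>"
    hence "?r = L" using L(3)[OF r] by blast
    thus False using xy by blast
  qed
  have d: "e \<otimes> e \<ominus> e \<in> L" using Ld ec e(1) by (auto simp: minus_eq)
  have "x \<otimes> (e \<otimes> e \<ominus> e) = \<zero>"
  proof -
    have "x \<otimes> (e \<otimes> e \<ominus> e) = (x \<otimes> e) \<otimes> e \<ominus> x \<otimes> e"
      using xc ec by (simp add: minus_eq r_distr r_minus m_assoc)
    also have "\<dots> = \<zero>" using e(2)[symmetric] xc by (simp add: minus_eq r_neg)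
    finally show ?thesis .
  qed
  hence "e \<otimes> e \<ominus> e = \<zero>" using r0 d by blast
  moreover have "e \<otimes> e = (e \<otimes> e \<ominus> e) \<oplus> e" using ec by (simp add: minus_eq a_assoc l_neg)
  ultimately have "e \<otimes> e = e" using ec by simp
  moreover have "e \<noteq> \<zero>" using e(2) xy(3) xc yc by auto
  ultimately show ?thesis using e(1) by blast
qed


lemma (in ring) prime_artinian_simple:
  assumes pr: "prime_ring R" and art: "right_artinian R"
    and I: "ideal I R" "\<exists>k\<in>I. k \<noteq> \<zero>"
  shows "\<one> \<in> I"
proof -
  have Ic: "I \<subseteq> carrier R" by (rule subsetI, rule ideal.Icarr[OF I(1)])
  define Z where "Z e = {x\<in>carrier R. e \<otimes> x = \<zero>}" for e
  have Zr: "right_ideal (Z e) R" if ec: "e \<in> carrier R" for e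
  proof (rule right_idealI)
    show "Z e \<subseteq> carrier R" unfolding Z_def by blast
    show "\<zero> \<in> Z e" unfolding Z_def using ec by simp
    fix a b assume "a \<in> Z e" "b \<in> Z e"
    thus "a \<oplus> b \<in> Z e" unfolding Z_def using ec by (simp add: r_distr)
  next
    fix a assume "a \<in> Z e"
    thus "\<ominus> a \<in> Z e" unfolding Z_def using ec by (simp add: r_minus)
  next
    fix a x assume a: "a \<in> Z e" and x: "x \<in> carrier R"
    have ac: "a \<in> carrier R" and ea: "e \<otimes> a = \<zero>" using a unfolding Z_def by auto
    have "e \<otimes> (a \<otimes> x) = (e \<otimes> a) \<otimes> x" using ac x ec by (simp add: m_assoc)
    also have "\<dots> = \<zero>" using ea x by simp
    finally show "a \<otimes> x \<in> Z e" using ac x unfolding Z_def by simp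
  qed
  let ?F = "{Z e | e. e \<in> I \<and> e \<otimes> e = e}"
  have "\<zero> \<in> I" using additive_subgroup.zero_closed[OF ideal.axioms(1)[OF I(1)]] by simp
  hence "Z \<zero> \<in> ?F" by (intro CollectI exI[of _ \<zero>]) simp
  hence "?F \<noteq> {}" by blast
  moreover have "\<And>K. K \<in> ?F \<Longrightarrow> right_ideal K R" using Zr Ic by blast
  ultimately obtain K where "K \<in> ?F" and Kmin: "\<forall>K'\<in>?F. K' \<subseteq> K \<longrightarrow> K' = K"
    using artinian_min[OF art] by meson
  then obtain e where e: "e \<in> I" "e \<otimes> e = e" "K = Z e" by blast
  have ec: "e \<in> carrier R" using e Ic by blast
  show ?thesis
  proof (cases "\<exists>x\<in>Z e. x \<noteq> \<zero>")
    case True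
    from minimal_nonzero[OF art Zr[OF ec] True] obtain L where
      L: "right_ideal L R" "L \<subseteq> Z e" "\<exists>x\<in>L. x \<noteq> \<zero>"
      "\<And>K. right_ideal K R \<Longrightarrow> K \<subseteq> L \<Longrightarrow> \<exists>x\<in>K. x \<noteq> \<zero> \<Longrightarrow> K = L" by blast
    have LI: "L \<subseteq> I" by (rule min_in_ideal[OF pr I L(1) L(3) L(4)])
    obtain f where f: "f \<in> L" "f \<noteq> \<zero>" "f \<otimes> f = f" using brauer[OF pr L(1) L(3) L(4)] by blast
    have fc: "f \<in> carrier R" and fI: "f \<in> I" using f LI Ic by auto
    have ef: "e \<otimes> f = \<zero>" using f L(2) unfolding Z_def by blast
    define g where "g = e \<oplus> f \<oplus> \<ominus> (f \<otimes> e)"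
    have gc: "g \<in> carrier R" unfolding g_def using ec fc by simp
    have IS: "additive_subgroup I R" by (rule ideal.axioms(1)[OF I(1)])
    have fe: "f \<otimes> e \<in> I" by (rule ideal.I_r_closed[OF I(1) fI ec])
    have ef1: "e \<oplus> f \<in> I" by (rule additive_subgroup.a_closed[OF IS e(1) fI])
    have fe1: "\<ominus> (f \<otimes> e) \<in> I" by (rule additive_subgroup.a_inv_closed[OF IS fe])
    have gI: "g \<in> I" unfolding g_def by (rule additive_subgroup.a_closed[OF IS ef1 fe1])
    have eg: "e \<otimes> g = e"
      unfolding g_def using ec fc ef e(2) by (simp add: r_distr r_minus m_assoc[symmetric])
    have gf: "g \<otimes> f = f"
      unfolding g_def using ec fc ef f(3) by (simp add: l_distr l_minus m_assoc)
    have fg: "f \<otimes> g = f \<otimes> e \<oplus> f \<oplus> \<ominus> (f \<otimes> e)"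
      unfolding g_def using ec fc ef f(3) e(2)
      by (simp add: r_distr r_minus m_assoc[symmetric])
    have feg: "f \<otimes> e \<otimes> g = f \<otimes> e" using eg ec fc gc by (simp add: m_assoc)
    have gg: "g \<otimes> g = g"
    proof -
      have "g \<otimes> g = (e \<oplus> f \<oplus> \<ominus> (f \<otimes> e)) \<otimes> g" by (simp only: g_def[symmetric])
      also have "\<dots> = e \<otimes> g \<oplus> f \<otimes> g \<oplus> \<ominus> (f \<otimes> e \<otimes> g)"
        using ec fc gc by (simp add: l_distr l_minus)
      also have "\<dots> = e \<oplus> (f \<otimes> e \<oplus> f \<oplus> \<ominus> (f \<otimes> e)) \<oplus> \<ominus> (f \<otimes> e)"
        using eg fg feg by simp
      also have "\<dots> = g" unfolding g_def using ec fc by (simp add: a_ac r_neg)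
      finally show ?thesis .
    qed
    have "Z g \<in> ?F" using gI gg by blast
    moreover have "Z g \<subseteq> Z e"
    proof
      fix x assume "x \<in> Z g"
      hence x: "x \<in> carrier R" "g \<otimes> x = \<zero>" unfolding Z_def by auto
      have "e \<otimes> x = (e \<otimes> g) \<otimes> x" using eg by simp
      also have "\<dots> = e \<otimes> (g \<otimes> x)" using ec gc x by (simp add: m_assoc)
      also have "\<dots> = \<zero>" using x ec by simp
      finally show "x \<in> Z e" using x unfolding Z_def by simp
    qed
    ultimately have "Z g = Z e" using Kmin e(3) by blast
    moreover have "f \<in> Z e" using f L(2) by blast
    moreover have "f \<notin> Z g" using gf f(2) unfolding Z_def by simp
    ultimately show ?thesis by blast
  next
    case False
    have "\<one> \<ominus> e \<in> Z e" unfolding Z_def using ec e(2)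
      by (simp add: minus_eq r_distr r_minus r_neg)
    hence "\<one> \<ominus> e = \<zero>" using False by blast
    moreover have "\<one> = (\<one> \<ominus> e) \<oplus> e" using ec by (simp add: minus_eq a_assoc l_neg)
    ultimately have "\<one> = e" using ec by simp
    thus ?thesis using e(1) by simp
  qed
qed

lemma (in ring) jacobson_zero:
  assumes pr: "prime_ring R" and one: "\<one> \<noteq> \<zero>"
    and tn: "T_nilpotent_for_right_modules (jacobson R) R"
  shows "jacobson R \<subseteq> {\<zero>}"
proof (rule ccontr)
  let ?J = "jacobson R"
  assume "\<not> ?J \<subseteq> {\<zero>}"
  then obtain a0 where a0: "a0 \<in> ?J" "a0 \<noteq> \<zero>" by blast
  have Jc: "?J \<subseteq> carrier R" unfolding jacobson_def by blast
  have Jr: "\<And>j s. j \<in> ?J \<Longrightarrow> s \<in> carrier R \<Longrightarrow> j \<otimes> s \<in> ?J"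
    unfolding jacobson_def maximal_right_ideal_def using right_idealD(5) by blast
  have claim: "\<exists>a\<in>?J. a \<otimes> y \<noteq> \<zero>" if y: "y \<in> carrier R" "y \<noteq> \<zero>" for y
  proof (rule ccontr)
    assume "\<not> ?thesis"
    hence yK: "\<forall>a\<in>?J. a \<otimes> y = \<zero>" by blast
    let ?K = "{x\<in>carrier R. \<forall>l\<in>?J. l \<otimes> x = \<zero>}"
    have K: "ideal ?K R" by (rule rann_ideal[OF Jc Jr])
    have Kc: "?K \<subseteq> carrier R" by blast
    let ?A = "{x\<in>carrier R. \<forall>k\<in>?K. x \<otimes> k = \<zero>}"
    have "\<And>k s. k \<in> ?K \<Longrightarrow> s \<in> carrier R \<Longrightarrow> s \<otimes> k \<in> ?K"
      using ideal.I_l_closed[OF K] by blast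
    hence A: "ideal ?A R" by (rule lann_ideal[OF Kc])
    have "?A \<subseteq> {\<zero>} \<or> ?K \<subseteq> {\<zero>}" by (rule prime_ringD[OF pr A K]) auto
    moreover have "y \<in> ?K" using y yK by blast
    moreover have "a0 \<in> ?A" using a0 Jc by blast
    ultimately show False using a0 y by blast
  qed
  define c where "c y = (SOME a. a \<in> ?J \<and> a \<otimes> y \<noteq> \<zero>)" for y
  have cprop: "c y \<in> ?J \<and> c y \<otimes> y \<noteq> \<zero>" if "y \<in> carrier R" "y \<noteq> \<zero>" for y
    unfolding c_def using claim[OF that] by (rule someI_ex[OF bexE]) blast
  define ys where "ys = rec_nat \<one> (\<lambda>n y. c y \<otimes> y)"
  have ys0: "ys 0 = \<one>" and ysS: "\<And>n. ys (Suc n) = c (ys n) \<otimes> ys n" unfolding ys_def by simp_all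
  have ysp: "ys n \<in> carrier R \<and> ys n \<noteq> \<zero>" for n
  proof (induction n)
    case 0 thus ?case using ys0 one by simp
  next
    case (Suc n) thus ?case using cprop[of "ys n"] Jc ysS[of n] by auto
  qed
  define a where "a n = c (ys (n - 1))" for n
  have rp: "rprod R a n = ys n" for n
    by (induction n) (simp_all add: ys0 ysS a_def)
  have "\<forall>n\<ge>1. a n \<in> ?J" unfolding a_def using cprop ysp by blast
  then obtain n where "n \<ge> 1" "rprod R a n = \<zero>" using tn unfolding T_nilpotent_for_right_modules_def by blast
  thus False using rp ysp by metis
qed

lemma (in ring) quot_zero_artinian:
  assumes "right_artinian (R Quot {\<zero>})"
  shows "right_artinian R"
  unfolding right_artinian_def
proof (intro allI impI)
  fix f :: "nat \<Rightarrow> 'a set"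
  assume f: "(\<forall>n. right_ideal (f n) R) \<and> (\<forall>n. f (Suc n) \<subseteq> f n)"
  interpret Z: ideal "{\<zero>}" R by (rule zeroideal)
  interpret H: ring_hom_ring R "R Quot {\<zero>}" "(+>) {\<zero>}" by (rule Z.rcos_ring_hom_ring)
  have sing: "{\<zero>} +> x = {x}" if "x \<in> carrier R" for x
    using that by (simp add: a_r_coset_def r_coset_def)
  have carQ: "carrier (R Quot {\<zero>}) = (+>) {\<zero>} ` carrier R"
    unfolding FactRing_def A_RCOSETS_def' by auto
  define g where "g n = (+>) {\<zero>} ` f n" for n
  have fc: "f n \<subseteq> carrier R" for n using f right_idealD(1) by blast
  have "right_ideal (g n) (R Quot {\<zero>})" for n
    unfolding right_ideal_def
  proof
    show "additive_subgroup (g n) (R Quot {\<zero>})"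
      unfolding g_def additive_subgroup_def
      using H.img_is_add_subgroup f unfolding right_ideal_def additive_subgroup_def by blast
    show "\<forall>a\<in>g n. \<forall>x\<in>carrier (R Quot {\<zero>}). a \<otimes>\<^bsub>R Quot {\<zero>}\<^esub> x \<in> g n"
    proof (intro ballI)
      fix a x assume a: "a \<in> g n" and x: "x \<in> carrier (R Quot {\<zero>})"
      from a obtain i where i: "i \<in> f n" "a = {\<zero>} +> i" unfolding g_def by blast
      from x obtain j where j: "j \<in> carrier R" "x = {\<zero>} +> j" unfolding carQ by blast
      have ic: "i \<in> carrier R" using i(1) fc by blast
      have fr: "right_ideal (f n) R" using f by blast
      have "a \<otimes>\<^bsub>R Quot {\<zero>}\<^esub> x = {\<zero>} +> (i \<otimes> j)"
        using i(2) j ic by (simp add: H.hom_mult)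
      moreover have "i \<otimes> j \<in> f n" by (rule right_idealD(5)[OF fr i(1) j(1)])
      ultimately show "a \<otimes>\<^bsub>R Quot {\<zero>}\<^esub> x \<in> g n" unfolding g_def by blast
    qed
  qed
  moreover have "\<forall>n. g (Suc n) \<subseteq> g n"
  proof
    fix m
    have "f (Suc m) \<subseteq> f m" using f by blast
    thus "g (Suc m) \<subseteq> g m" unfolding g_def by (rule image_mono)
  qed
  ultimately obtain n where n: "\<forall>m\<ge>n. g m = g n" using assms unfolding right_artinian_def by blast
  have inj: "inj_on ((+>) {\<zero>}) (carrier R)" using sing by (simp add: inj_on_def)
  have "\<forall>m\<ge>n. f m = f n"
  proof (intro allI impI)
    fix m assume "n \<le> m"
    hence "g m = g n" using n by blast
    thus "f m = f n" using inj fc unfolding g_def by (simp add: inj_on_image_eq_iff)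
  qed
  thus "\<exists>n. \<forall>m\<ge>n. f m = f n" by blast
qed


lemma (in ring) prime_quot_maximal:
  assumes P: "prime_ideal P R" "P \<noteq> {\<zero>}"
    and rap: "right_almost_perfect R"
  shows "maximal_two_sided_ideal P R"
proof -
  have PI: "ideal P R" and Pne: "P \<noteq> carrier R" using P(1) unfolding prime_ideal_def by auto
  interpret PI: ideal P R by (rule PI)
  let ?S = "R Quot P"
  interpret S: ring ?S by (rule PI.quotient_is_ring)
  interpret H: ring_hom_ring R ?S "(+>) P" by (rule PI.rcos_ring_hom_ring)
  have carS: "carrier ?S = (+>) P ` carrier R" unfolding FactRing_def A_RCOSETS_def' by auto
  have zS: "\<zero>\<^bsub>?S\<^esub> = P" unfolding FactRing_def by simp
  have oneS: "\<one>\<^bsub>?S\<^esub> = P +> \<one>" unfolding FactRing_def by simp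
  have hz: "P +> x = P \<longleftrightarrow> x \<in> P" if xc: "x \<in> carrier R" for x
  proof
    assume "P +> x = P" thus "x \<in> P" using PI.a_rcos_self[OF xc] by simp
  next
    assume "x \<in> P" thus "P +> x = P" by (rule PI.a_rcos_const)
  qed
  have one_notin: "\<one> \<notin> P"
  proof
    assume "\<one> \<in> P"
    hence "P = carrier R" by (rule PI.one_imp_carrier)
    with Pne show False by (rule notE)
  qed
  have "P +> \<one> \<noteq> P"
  proof
    assume "P +> \<one> = P"
    hence "\<one> \<in> P" using hz[OF one_closed] by blast
    with one_notin show False by (rule notE)
  qed
  hence S10: "\<one>\<^bsub>?S\<^esub> \<noteq> \<zero>\<^bsub>?S\<^esub>" unfolding oneS zS .
  have Sprime: "prime_ring ?S"
    unfolding prime_ring_def prime_ideal_def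
  proof (intro conjI allI impI)
    show "ideal {\<zero>\<^bsub>?S\<^esub>} ?S" by (rule S.zeroideal)
    show "{\<zero>\<^bsub>?S\<^esub>} \<noteq> carrier ?S"
    proof
      assume "{\<zero>\<^bsub>?S\<^esub>} = carrier ?S"
      hence "\<one>\<^bsub>?S\<^esub> \<in> {\<zero>\<^bsub>?S\<^esub>}" using S.one_closed by simp
      with S10 show False by simp
    qed
    fix A B assume AB: "ideal A ?S \<and> ideal B ?S \<and> (\<forall>a\<in>A. \<forall>b\<in>B. a \<otimes>\<^bsub>?S\<^esub> b \<in> {\<zero>\<^bsub>?S\<^esub>})"
    have Ai: "ideal A ?S" and Bi: "ideal B ?S" using AB by auto
    have A': "ideal {r \<in> carrier R. P +> r \<in> A} R" by (rule H.ideal_vimage[OF Ai])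
    have B': "ideal {r \<in> carrier R. P +> r \<in> B} R" by (rule H.ideal_vimage[OF Bi])
    have prod: "\<forall>a\<in>{r \<in> carrier R. P +> r \<in> A}. \<forall>b\<in>{r \<in> carrier R. P +> r \<in> B}. a \<otimes> b \<in> P"
    proof (intro ballI)
      fix a b assume a: "a \<in> {r \<in> carrier R. P +> r \<in> A}" and b: "b \<in> {r \<in> carrier R. P +> r \<in> B}"
      have ac: "a \<in> carrier R" and bc: "b \<in> carrier R" using a b by auto
      have "P +> (a \<otimes> b) = (P +> a) \<otimes>\<^bsub>?S\<^esub> (P +> b)" using ac bc by (simp add: H.hom_mult)
      also have "\<dots> = P" using AB a b zS by auto
      finally show "a \<otimes> b \<in> P" using hz ac bc by (metis m_closed)
    qed
    have disj: "{r \<in> carrier R. P +> r \<in> A} \<subseteq> P \<or> {r \<in> carrier R. P +> r \<in> B} \<subseteq> P"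
      using P(1) A' B' prod unfolding prime_ideal_def by blast
    have sub: "C \<subseteq> {\<zero>\<^bsub>?S\<^esub>}" if C: "ideal C ?S" "{r \<in> carrier R. P +> r \<in> C} \<subseteq> P" for C
    proof
      fix z assume z: "z \<in> C"
      have "z \<in> carrier ?S" by (rule ideal.Icarr[OF C(1) z])
      then obtain r where r: "r \<in> carrier R" "z = P +> r" unfolding carS by blast
      hence "r \<in> P" using C(2) z by blast
      thus "z \<in> {\<zero>\<^bsub>?S\<^esub>}" using hz r zS by simp
    qed
    show "A \<subseteq> {\<zero>\<^bsub>?S\<^esub>} \<or> B \<subseteq> {\<zero>\<^bsub>?S\<^esub>}"
      using disj sub[OF Ai] sub[OF Bi] by blast
  qed
  have rp: "right_perfect ?S" using rap P(2) PI Pne unfolding right_almost_perfect_def by blast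
  have sl: "semilocal ?S" and tn: "T_nilpotent_for_right_modules (jacobson ?S) ?S"
    using rp unfolding right_perfect_def by auto
  have J0: "jacobson ?S \<subseteq> {\<zero>\<^bsub>?S\<^esub>}" by (rule S.jacobson_zero[OF Sprime S10 tn])
  have "\<zero>\<^bsub>?S\<^esub> \<in> jacobson ?S"
    unfolding jacobson_def maximal_right_ideal_def using S.right_idealD(2) S.zero_closed by auto
  hence J: "jacobson ?S = {\<zero>\<^bsub>?S\<^esub>}" using J0 by blast
  have "right_artinian (?S Quot {\<zero>\<^bsub>?S\<^esub>})"
    using sl unfolding semilocal_def semisimple_artinian_def J by blast
  hence art: "right_artinian ?S" by (rule S.quot_zero_artinian)
  show ?thesis
    unfolding maximal_two_sided_ideal_def
  proof (intro conjI allI impI)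
    show "ideal P R" by (rule PI)
    show "P \<noteq> carrier R" by (rule Pne)
    fix I assume I: "ideal I R \<and> P \<subseteq> I"
    have II: "ideal I R" using I by blast
    show "I = P \<or> I = carrier R"
    proof (cases "I = P")
      case True thus ?thesis by simp
    next
      case False
      then obtain x where x: "x \<in> I" "x \<notin> P" using I by blast
      have xc: "x \<in> carrier R" by (rule ideal.Icarr[OF II x(1)])
      have I': "ideal ((+>) P ` I) ?S" by (rule ring_ideal_imp_quot_ideal[OF PI II])
      have "P +> x \<in> (+>) P ` I" using x(1) by blast
      moreover have "P +> x \<noteq> \<zero>\<^bsub>?S\<^esub>" using x(2) hz[OF xc] zS by simp
      ultimately have "\<one>\<^bsub>?S\<^esub> \<in> (+>) P ` I"
        using S.prime_artinian_simple[OF Sprime art I'] by blast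
      hence "P +> \<one> \<in> (+>) P ` I" unfolding oneS .
      then obtain i0 where i0: "P +> \<one> = P +> i0" "i0 \<in> I" by (rule imageE)
      have i: "i0 \<in> I" "P +> \<one> = P +> i0" using i0 by auto
      have ic: "i0 \<in> carrier R" by (rule ideal.Icarr[OF II i(1)])
      have "\<one> \<in> P +> i0" using PI.a_rcos_self[OF one_closed] unfolding i(2) .
      hence "\<one> \<oplus> \<ominus> i0 \<in> P" by (rule PI.a_rcos_module_imp[OF ic])
      hence d: "\<one> \<oplus> \<ominus> i0 \<in> I" using I by blast
      have IS: "additive_subgroup I R" by (rule ideal.axioms(1)[OF II])
      have "(\<one> \<oplus> \<ominus> i0) \<oplus> i0 \<in> I" by (rule additive_subgroup.a_closed[OF IS d i(1)])
      moreover have "(\<one> \<oplus> \<ominus> i0) \<oplus> i0 = \<one>" using ic by (simp add: a_assoc l_neg)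
      ultimately have "\<one> \<in> I" by simp
      hence "I = carrier R" by (rule ideal.one_imp_carrier[OF II])
      thus ?thesis by simp
    qed
  qed
qed

theorem corollary3p4:
  fixes R :: "('a, 'b) ring_scheme"
  assumes "ring R"
    and "\<one>\<^bsub>R\<^esub> \<noteq> \<zero>\<^bsub>R\<^esub>"
    and "prime_ring R"
    and "right_almost_perfect R"
  shows "h_local R"
  unfolding h_local_def
proof (intro conjI allI impI)
  fix I assume "ideal I R \<and> I \<noteq> {\<zero>\<^bsub>R\<^esub>} \<and> I \<noteq> carrier R"
  thus "semilocal (R Quot I)" using assms(4) unfolding right_almost_perfect_def right_perfect_def by blast
next
  fix P assume P: "prime_ideal P R \<and> P \<noteq> {\<zero>\<^bsub>R\<^esub>}"
  have M: "maximal_two_sided_ideal P R"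
    by (rule ring.prime_quot_maximal[OF assms(1) _ _ assms(4)]) (use P in auto)
  show "\<exists>!M. maximal_two_sided_ideal M R \<and> P \<subseteq> M"
  proof (rule ex1I[of _ P])
    show "maximal_two_sided_ideal P R \<and> P \<subseteq> P" using M by simp
    fix M' assume M': "maximal_two_sided_ideal M' R \<and> P \<subseteq> M'"
    hence "M' = P \<or> M' = carrier R" using M unfolding maximal_two_sided_ideal_def by blast
    thus "M' = P" using M' unfolding maximal_two_sided_ideal_def by blast
  qed
qed

end
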